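(* Let $\langle x_n\rangle$ be a cofinally Bourbaki quasi-Cauchy sequence of distinct terms in a metric space $\langle X,d\rangle$. Then there exists a pairwise disjoint family $\{M_j: j\in\mathbb{N}\}$ of infinite subsets of $\mathbb{N}$ such that for every $j\in\mathbb{N}$ and all $i,\ell\in M_j$, the points $x_i$ and $x_\ell$ can be joined by a $\frac1j$-chain.
   Context: For $\varepsilon>0$, an $\varepsilon$-chain joining $x,y\in X$ is a finite sequence $x=u_0,u_1,\dots,u_n=y$ in $X$ with $d(u_{i-1},u_i)<\varepsilon$ for all $i$. A sequence $\langle x_n\rangle$ in $X$ is cofinally Bourbaki quasi-Cauchy if for every $\varepsilon>0$ there is an infinite set $N_\varepsilon\subseteq\mathbb{N}$ such that for all $j,k\in N_\varepsilon$, $x_j$ and $x_k$ can be joined by an $\varepsilon$-chain. *)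

theory Defs
  imports "HOL-Analysis.Analysis"
begin

definition eps_chain :: "real \<Rightarrow> 'a::metric_space \<Rightarrow> 'a \<Rightarrow> bool" where
  "eps_chain e x y \<longleftrightarrow>
     (\<exists>us::'a list. us \<noteq> [] \<and> hd us = x \<and> last us = y \<and>
        (\<forall>i. Suc i < length us \<longrightarrow> dist (us ! i) (us ! Suc i) < e))"

definition cofinally_bourbaki_quasi_cauchy :: "(nat \<Rightarrow> 'a::metric_space) \<Rightarrow> bool" where
  "cofinally_bourbaki_quasi_cauchy x \<longleftrightarrow>
     (\<forall>e>0. \<exists>N::nat set. infinite N \<and> (\<forall>j\<in>N. \<forall>k\<in>N. eps_chain e (x j) (x k)))"

end

theory Submission
  imports Defs
begin

primrec sel :: "(nat \<Rightarrow> nat set) \<Rightarrow> nat \<Rightarrow> nat" where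
  "sel S 0 = (LEAST t. t \<in> S 0)"
| "sel S (Suc n) = (LEAST t. t \<in> S (Suc n) \<and> sel S n < t)"

lemma sel_props:
  fixes S :: "nat \<Rightarrow> nat set" and n :: nat
  assumes "\<And>n. infinite (S n)"
  shows "sel S n \<in> S n \<and> (\<forall>m. n = Suc m \<longrightarrow> sel S m < sel S n)"
proof (cases n)
  case 0
  have "S 0 \<noteq> {}" using assms[of 0] by auto
  then obtain t where "t \<in> S 0" by auto
  then show ?thesis using 0 by (auto intro: LeastI)
next
  case (Suc m)
  from assms[of "Suc m"] obtain t where "t \<in> S (Suc m)" "sel S m < t"
    unfolding infinite_nat_iff_unbounded by blast
  then have "(LEAST t. t \<in> S (Suc m) \<and> sel S m < t) \<in> S (Suc m) \<and> sel S m < (LEAST t. t \<in> S (Suc m) \<and> sel S m < t)"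
    by (intro LeastI[where P="\<lambda>t. t \<in> S (Suc m) \<and> sel S m < t"]) auto
  then show ?thesis using Suc by auto
qed

lemma sel_mono:
  fixes S :: "nat \<Rightarrow> nat set"
  assumes "\<And>n. infinite (S n)"
  shows "strict_mono (sel S)"
proof (rule strict_monoI_Suc)
  fix n
  have "sel S (Suc n) \<in> S (Suc n) \<and> (\<forall>m. Suc n = Suc m \<longrightarrow> sel S m < sel S (Suc n))"
    by (rule sel_props[OF assms])
  then show "sel S n < sel S (Suc n)" by simp
qed

theorem mainTheorem3:
  fixes x :: "nat \<Rightarrow> 'a::metric_space"
  assumes "cofinally_bourbaki_quasi_cauchy x"
    and "inj x"
  shows "\<exists>M :: nat \<Rightarrow> nat set.
           disjoint_family_on M {1..} \<and>
           (\<forall>j\<ge>1. infinite (M j)) \<and>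
           (\<forall>j\<ge>1. \<forall>i\<in>M j. \<forall>l\<in>M j. eps_chain (1 / real j) (x i) (x l))"
proof -
  have "\<forall>j. \<exists>N::nat set. infinite N \<and> (j \<ge> 1 \<longrightarrow> (\<forall>a\<in>N. \<forall>b\<in>N. eps_chain (1 / real j) (x a) (x b)))"
  proof
    fix j :: nat
    show "\<exists>N::nat set. infinite N \<and> (j \<ge> 1 \<longrightarrow> (\<forall>a\<in>N. \<forall>b\<in>N. eps_chain (1 / real j) (x a) (x b)))"
    proof (cases "j \<ge> 1")
      case True
      then have "1 / real j > 0" by simp
      then obtain N where "infinite N" "\<forall>a\<in>N. \<forall>b\<in>N. eps_chain (1 / real j) (x a) (x b)" using assms(1) unfolding cofinally_bourbaki_quasi_cauchy_def by blast
      then show ?thesis by blast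
    next
      case False
      then show ?thesis by (intro exI[of _ UNIV]) auto
    qed
  qed
  then obtain N where N: "\<And>j. infinite (N j)"
    "\<And>j a b. j \<ge> 1 \<Longrightarrow> a \<in> N j \<Longrightarrow> b \<in> N j \<Longrightarrow> eps_chain (1 / real j) (x a) (x b)"
    by metis
  define S where "S n = N (fst (prod_decode n))" for n
  have SI: "\<And>n. infinite (S n)" using N(1) by (simp add: S_def)
  define a where "a = sel S"
  have am: "strict_mono a" using sel_mono[where S=S, OF SI] by (simp add: a_def)
  then have ainj: "inj a" by (rule strict_mono_imp_inj_on)
  have aS: "a (prod_encode (j, k)) \<in> N j" for j k
    using sel_props[where S=S and n="prod_encode (j,k)", OF SI] by (simp add: a_def S_def)
  define M where "M j = range (\<lambda>k. a (prod_encode (j, k)))" for j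
  have "disjoint_family_on M {1..}"
    unfolding disjoint_family_on_def M_def
  proof (intro ballI impI)
    fix m n :: nat assume "m \<noteq> n"
    show "range (\<lambda>k. a (prod_encode (m, k))) \<inter> range (\<lambda>k. a (prod_encode (n, k))) = {}"
    proof (rule ccontr)
      assume "range (\<lambda>k. a (prod_encode (m, k))) \<inter> range (\<lambda>k. a (prod_encode (n, k))) \<noteq> {}"
      then obtain k l where "a (prod_encode (m, k)) = a (prod_encode (n, l))" by auto
      then have "prod_encode (m, k) = prod_encode (n, l)" using ainj by (simp add: inj_eq)
      then have "(m, k) = (n, l)" by (simp add: prod_encode_eq)
      then show False using \<open>m \<noteq> n\<close> by simp
    qed
  qed
  moreover have "infinite (M j)" for j
  proof -
    have "inj (\<lambda>k. a (prod_encode (j, k)))"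
      by (rule injI) (use ainj in \<open>auto simp: inj_eq prod_encode_eq\<close>)
    then show ?thesis unfolding M_def using range_inj_infinite by blast
  qed
  moreover have "M j \<subseteq> N j" for j using aS by (auto simp: M_def)
  ultimately show ?thesis using N(2) by (intro exI[of _ M] conjI allI impI ballI) (auto simp: subset_iff)
qed

end
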